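(* Let $V$ be a finite-dimensional vector space over $\mathbb{Q}$, let $h\in GL(V)$ and let $h=h_sh_u$ be its Chevalley (Jordan) decomposition, with $h_s$ semisimple, $h_u$ unipotent and $h_sh_u=h_uh_s$. Then $\mathrm{ht}(h)=\mathrm{ht}(h_s)$.
   Context: A lattice of $V$ is a finitely generated subgroup containing a basis of $V$. For $h\in GL(V)$, $\mathrm{ht}(h)$ is the minimum of $[\Lambda:E]$ over all pairs of lattices $E\subset\Lambda$ of $V$ with $h(E)\subset\Lambda$. *)

theory Defs
  imports "HOL-Analysis.Analysis"
begin

text \<open>V = Q^n, modelled as rat^'n; elements of GL(V) as invertible matrices acting by *v.\<close>

definition int_span :: "(rat^'n) set \<Rightarrow> (rat^'n) set" where
  "int_span S = {\<Sum>s\<in>S. of_int (c s) *s s | c. True}"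

definition is_lattice :: "(rat^'n) set \<Rightarrow> bool" where
  "is_lattice L \<longleftrightarrow>
     (\<exists>S. finite S \<and> L = int_span S) \<and>
     (\<exists>B\<subseteq>L. vec.independent B \<and> vec.span B = UNIV)"

definition lattice_index :: "(rat^'n) set \<Rightarrow> (rat^'n) set \<Rightarrow> nat" where
  "lattice_index \<Lambda> E = card ((\<lambda>x. (\<lambda>e. x + e) ` E) ` \<Lambda>)"

definition ht :: "rat^'n^'n \<Rightarrow> nat" where
  "ht h = (LEAST k. \<exists>E \<Lambda>. is_lattice E \<and> is_lattice \<Lambda> \<and> E \<subseteq> \<Lambda> \<and>
                         (\<lambda>x. h *v x) ` E \<subseteq> \<Lambda> \<and> k = lattice_index \<Lambda> E)"

definition cmat :: "rat^'n^'n \<Rightarrow> complex^'n^'n" where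
  "cmat A = (\<chi> i j. of_rat (A $ i $ j))"

text \<open>Semisimple: diagonalizable over an algebraically closed field (C) containing Q.\<close>
definition semisimple :: "rat^'n^'n \<Rightarrow> bool" where
  "semisimple A \<longleftrightarrow> (\<exists>P Q D :: complex^'n^'n. P ** Q = mat 1 \<and> Q ** P = mat 1 \<and>
      Q ** cmat A ** P = D \<and> (\<forall>i j. i \<noteq> j \<longrightarrow> D $ i $ j = 0))"

definition unipotent :: "rat^'n^'n \<Rightarrow> bool" where
  "unipotent A \<longleftrightarrow> (\<exists>k. ((\<lambda>X. X ** (A - mat 1)) ^^ k) (mat 1) = 0)"

end

theory Submission
  imports Defs
begin

definition grp :: "(rat^'n) set \<Rightarrow> bool" where
  "grp X \<longleftrightarrow> 0 \<in> X \<and> (\<forall>x\<in>X. \<forall>y\<in>X. x + y \<in> X) \<and> (\<forall>x\<in>X. -x \<in> X)"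

definition cosets :: "(rat^'n) set \<Rightarrow> (rat^'n) set \<Rightarrow> (rat^'n) set set" where
  "cosets A B = (\<lambda>x. (+) x ` B) ` A"

definition smul :: "nat \<Rightarrow> (rat^'n) set \<Rightarrow> (rat^'n) set" where
  "smul m X = (\<lambda>x. of_nat m *s x) ` X"

lemma grp_0: "grp X \<Longrightarrow> 0 \<in> X" by (simp add: grp_def)
lemma grp_add: "grp X \<Longrightarrow> x \<in> X \<Longrightarrow> y \<in> X \<Longrightarrow> x + y \<in> X" by (simp add: grp_def)
lemma grp_neg: "grp X \<Longrightarrow> x \<in> X \<Longrightarrow> - x \<in> X" by (simp add: grp_def)
lemma grp_diff: "grp X \<Longrightarrow> x \<in> X \<Longrightarrow> y \<in> X \<Longrightarrow> x - y \<in> X"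
  by (metis diff_conv_add_uminus grp_add grp_neg)

lemma grp_nat_mult: "grp X \<Longrightarrow> x \<in> X \<Longrightarrow> of_nat k *s x \<in> X"
proof (induction k)
  case 0 then show ?case by (simp add: grp_0)
next
  case (Suc k)
  have "of_nat (Suc k) *s x = x + of_nat k *s x" by (simp add: vector_sadd_rdistrib)
  then show ?case using Suc grp_add by metis
qed

lemma grp_int_mult: assumes "grp X" "x \<in> X" shows "of_int k *s x \<in> X"
proof (cases "k \<ge> 0")
  case True
  then have e: "of_int k *s x = of_nat (nat k) *s x" by simp
  show ?thesis unfolding e by (rule grp_nat_mult[OF assms])
next
  case False
  then have e0: "of_int k = - (of_nat (nat (-k)) :: rat)" by simp
  have e: "of_int k *s x = - (of_nat (nat (-k)) *s x)"
    unfolding e0 by (rule vector_smult_lneg)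
  show ?thesis unfolding e by (rule grp_neg[OF assms(1) grp_nat_mult[OF assms]])
qed

lemma grp_sum: assumes "grp X" "finite F" "\<And>i. i \<in> F \<Longrightarrow> f i \<in> X" shows "sum f F \<in> X"
  using assms(2,3)
proof (induction F rule: finite_induct)
  case empty then show ?case by (simp add: grp_0[OF assms(1)])
next
  case (insert a F) then show ?case by (simp add: grp_add[OF assms(1)])
qed

lemma int_span_grp: "grp (int_span S)"
  unfolding grp_def int_span_def
proof (intro conjI ballI)
  show "0 \<in> {\<Sum>s\<in>S. of_int (c s) *s s |c. True}"
    by (rule CollectI, rule exI[of _ "\<lambda>_. 0"]) simp
next
  fix x y assume "x \<in> {\<Sum>s\<in>S. of_int (c s) *s s |c. True}" "y \<in> {\<Sum>s\<in>S. of_int (c s) *s s |c. True}"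
  then obtain c d where "x = (\<Sum>s\<in>S. of_int (c s) *s s)" "y = (\<Sum>s\<in>S. of_int (d s) *s s)" by auto
  then have "x + y = (\<Sum>s\<in>S. of_int (c s + d s) *s s)"
    by (simp add: sum.distrib vector_sadd_rdistrib)
  then show "x + y \<in> {\<Sum>s\<in>S. of_int (c s) *s s |c. True}"
    by (simp only: mem_Collect_eq) (rule exI[of _ "\<lambda>s. c s + d s"], blast)
next
  fix x assume "x \<in> {\<Sum>s\<in>S. of_int (c s) *s s |c. True}"
  then obtain c where "x = (\<Sum>s\<in>S. of_int (c s) *s s)" by auto
  then have "- x = (\<Sum>s\<in>S. of_int (- c s) *s s)"
    by (simp add: sum_negf vector_smult_lneg)
  then show "- x \<in> {\<Sum>s\<in>S. of_int (c s) *s s |c. True}"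
    by (simp only: mem_Collect_eq) (rule exI[of _ "\<lambda>s. - c s"], blast)
qed

lemma int_span_gen: fixes S :: "(rat^'n) set" assumes "finite S" "s \<in> S" shows "s \<in> int_span S"
proof -
  have "\<And>t::rat^'n. of_int (if t = s then 1 else 0) *s t = (if t = s then t else 0)"
    by simp
  then have "(\<Sum>t\<in>S. of_int (if t = s then 1 else 0) *s t) = (\<Sum>t\<in>S. if t = s then t else 0)"
    by presburger
  also have "\<dots> = s" using assms by (simp only: sum.delta if_True)
  finally have e: "(\<Sum>t\<in>S. of_int (if t = s then 1 else 0) *s t) = s" .
  have "\<exists>c. s = (\<Sum>t\<in>S. of_int (c t) *s t) \<and> True"
    by (rule exI[of _ "\<lambda>t. if t = s then 1 else 0"]) (simp only: e)
  then show ?thesis unfolding int_span_def by (simp only: mem_Collect_eq)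
qed

lemma int_span_memI: "(\<Sum>s\<in>S. of_int (c s) *s s) \<in> int_span S"
  unfolding int_span_def by (simp only: mem_Collect_eq) (rule exI[of _ c], simp)

lemma int_span_least: assumes "grp X" "S \<subseteq> X" shows "int_span S \<subseteq> X"
proof
  fix x assume "x \<in> int_span S"
  then obtain c where x: "x = (\<Sum>s\<in>S. of_int (c s) *s s)" unfolding int_span_def by auto
  show "x \<in> X"
  proof (cases "finite S")
    case True
    then show ?thesis unfolding x using assms by (intro grp_sum grp_int_mult) auto
  next
    case False then show ?thesis using x grp_0[OF assms(1)] by simp
  qed
qed

lemma lattice_grp: "is_lattice L \<Longrightarrow> grp L"
  unfolding is_lattice_def using int_span_grp by blast

lemma grp_smul: assumes "grp X" shows "grp (smul m X)"
  unfolding grp_def smul_def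
proof (intro conjI ballI)
  show "0 \<in> (\<lambda>x. of_nat m *s x) ` X"
    using grp_0[OF assms] by (metis vector_smult_rzero image_eqI)
next
  fix x y assume "x \<in> (\<lambda>x. of_nat m *s x) ` X" "y \<in> (\<lambda>x. of_nat m *s x) ` X"
  then obtain a b where ab: "a \<in> X" "b \<in> X" "x = of_nat m *s a" "y = of_nat m *s b" by auto
  then have "x + y = of_nat m *s (a + b)" by (simp add: vector_add_ldistrib)
  then show "x + y \<in> (\<lambda>x. of_nat m *s x) ` X" using grp_add[OF assms ab(1,2)] by blast
next
  fix x assume "x \<in> (\<lambda>x. of_nat m *s x) ` X"
  then obtain a where ab: "a \<in> X" "x = of_nat m *s a" by auto
  then have "- x = of_nat m *s (- a)" by (simp add: vector_smult_rneg)
  then show "- x \<in> (\<lambda>x. of_nat m *s x) ` X" using grp_neg[OF assms ab(1)] by blast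
qed

lemma grp_image: assumes "grp X" shows "grp ((\<lambda>x. P *v x) ` X)"
  unfolding grp_def
proof (intro conjI ballI)
  show "0 \<in> (\<lambda>x. P *v x) ` X"
    using grp_0[OF assms] by (metis matrix_vector_mult_0_right image_eqI)
next
  fix x y assume "x \<in> (\<lambda>x. P *v x) ` X" "y \<in> (\<lambda>x. P *v x) ` X"
  then obtain a b where ab: "a \<in> X" "b \<in> X" "x = P *v a" "y = P *v b" by auto
  then have "x + y = P *v (a + b)" by (simp add: matrix_vector_right_distrib)
  then show "x + y \<in> (\<lambda>x. P *v x) ` X" using grp_add[OF assms ab(1,2)] by blast
next
  fix x assume "x \<in> (\<lambda>x. P *v x) ` X"
  then obtain a where ab: "a \<in> X" "x = P *v a" by auto
  then have "- x = P *v (- a)" by (simp add: vec.neg)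
  then show "- x \<in> (\<lambda>x. P *v x) ` X" using grp_neg[OF assms ab(1)] by blast
qed

lemma grp_inter: "grp X \<Longrightarrow> grp Y \<Longrightarrow> grp (X \<inter> Y)"
  unfolding grp_def by blast

lemma grp_ker: "grp {x. P *v x = 0}"
  unfolding grp_def by (simp add: matrix_vector_right_distrib vec.neg)

(* cosets *)

lemma coset_eq: assumes "grp X" "y - r \<in> X" shows "(+) y ` X = (+) r ` X"
proof (intro equalityI subsetI)
  fix z assume "z \<in> (+) y ` X"
  then obtain a where a: "a \<in> X" "z = y + a" by auto
  then have "z = r + ((y - r) + a)" by simp
  then show "z \<in> (+) r ` X" using grp_add[OF assms(1) assms(2) a(1)] by blast
next
  fix z assume "z \<in> (+) r ` X"
  then obtain a where a: "a \<in> X" "z = r + a" by auto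
  have n: "r - y \<in> X" using grp_neg[OF assms] by (metis minus_diff_eq)
  have "z = y + ((r - y) + a)" using a by simp
  then show "z \<in> (+) y ` X" using grp_add[OF assms(1) n a(1)] by blast
qed

lemma coset_eqD: assumes "grp X" "(+) y ` X = (+) r ` X" shows "y - r \<in> X"
proof -
  have "y \<in> (+) y ` X" using grp_0[OF assms(1)] by (metis add.right_neutral image_eqI)
  then have "y \<in> (+) r ` X" using assms(2) by simp
  then obtain a where "a \<in> X" "y = r + a" by auto
  then show ?thesis by simp
qed

lemma coset_mem: "grp X \<Longrightarrow> y \<in> (+) y ` X"
  using grp_0 by (metis add.right_neutral image_eqI)

lemma coset_disj: assumes "grp X" "z \<in> (+) y ` X" "z \<in> (+) r ` X" shows "(+) y ` X = (+) r ` X"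
proof -
  obtain a b where "a \<in> X" "b \<in> X" "z = y + a" "z = r + b" using assms(2,3) by auto
  then have "y - r = b - a" by (simp add: algebra_simps)
  then have "y - r \<in> X" using grp_diff[OF assms(1)] \<open>a \<in> X\<close> \<open>b \<in> X\<close> by simp
  then show ?thesis by (rule coset_eq[OF assms(1)])
qed

lemma finite_cosets_reps:
  assumes "grp X" "finite R" "\<And>y. y \<in> Y \<Longrightarrow> \<exists>r\<in>R. y - r \<in> X"
  shows "finite (cosets Y X)"
proof -
  have "cosets Y X \<subseteq> (\<lambda>r. (+) r ` X) ` R"
  proof
    fix C assume "C \<in> cosets Y X"
    then obtain y where y: "y \<in> Y" "C = (+) y ` X" unfolding cosets_def by auto
    then obtain r where "r \<in> R" "y - r \<in> X" using assms(3) by blast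
    then show "C \<in> (\<lambda>r. (+) r ` X) ` R" using y coset_eq[OF assms(1)] by blast
  qed
  then show ?thesis using assms(2) finite_subset by blast
qed

lemma cosets_nonempty: "Y \<noteq> {} \<Longrightarrow> cosets Y X \<noteq> {}"
  unfolding cosets_def by simp

lemma card_cosets_pos: "finite (cosets Y X) \<Longrightarrow> Y \<noteq> {} \<Longrightarrow> card (cosets Y X) > 0"
  using cosets_nonempty card_gt_0_iff by blast

lemma translate_inj: "inj_on (\<lambda>Z. (+) (y::rat^'n) ` Z) W"
proof (rule inj_onI)
  fix Z1 Z2 :: "(rat^'n) set" assume "(+) y ` Z1 = (+) y ` Z2"
  then have "(+) (-y) ` ((+) y ` Z1) = (+) (-y) ` ((+) y ` Z2)" by simp
  then show "Z1 = Z2" by (simp add: image_image)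
qed

lemma tower:
  assumes gA: "grp A" and gB: "grp B" and gC: "grp C" and AB: "A \<subseteq> B" and BC: "B \<subseteq> C"
    and fin: "finite (cosets C A)"
  shows "card (cosets C A) = card (cosets C B) * card (cosets B A)"
proof -
  define G where "G Y = {Z \<in> cosets C A. Z \<subseteq> Y}" for Y
  have U: "cosets C A = (\<Union>Y\<in>cosets C B. G Y)"
  proof (intro equalityI subsetI)
    fix Z assume Z: "Z \<in> cosets C A"
    then obtain c where c: "c \<in> C" "Z = (+) c ` A" unfolding cosets_def by auto
    have "(+) c ` B \<in> cosets C B" using c unfolding cosets_def by auto
    moreover have "Z \<subseteq> (+) c ` B" using c AB by auto
    ultimately show "Z \<in> (\<Union>Y\<in>cosets C B. G Y)" using Z unfolding G_def by auto
  qed (auto simp: G_def)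
  have finB: "finite (cosets C B)"
  proof -
    have "cosets C B \<subseteq> (\<lambda>Z. (+) (SOME z. z \<in> Z) ` B) ` cosets C A"
    proof
      fix Y assume "Y \<in> cosets C B"
      then obtain c where c: "c \<in> C" "Y = (+) c ` B" unfolding cosets_def by auto
      define Z where "Z = (+) c ` A"
      have ZC: "Z \<in> cosets C A" using c unfolding Z_def cosets_def by auto
      have "c \<in> Z" unfolding Z_def by (rule coset_mem[OF gA])
      then have "(SOME z. z \<in> Z) \<in> Z" by (rule someI)
      then obtain a where a: "a \<in> A" "(SOME z. z \<in> Z) = c + a" unfolding Z_def by auto
      have h: "(+) (SOME z. z \<in> Z) ` B = (+) c ` B"
        by (rule coset_eq[OF gB]) (use a AB in auto)
      have "Y = (\<lambda>Z. (+) (SOME z. z \<in> Z) ` B) Z" using h c by simp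
      then show "Y \<in> (\<lambda>Z. (+) (SOME z. z \<in> Z) ` B) ` cosets C A" using ZC by (rule image_eqI)
    qed
    then show ?thesis using fin finite_subset by blast
  qed
  have each: "card (G Y) = card (cosets B A)" if Y: "Y \<in> cosets C B" for Y
  proof -
    obtain y where y: "y \<in> C" "Y = (+) y ` B" using Y unfolding cosets_def by auto
    have "G Y = (\<lambda>Z. (+) y ` Z) ` cosets B A"
    proof (intro equalityI subsetI)
      fix Z assume "Z \<in> G Y"
      then have Z: "Z \<in> cosets C A" "Z \<subseteq> Y" unfolding G_def by auto
      then obtain c where c: "c \<in> C" "Z = (+) c ` A" unfolding cosets_def by auto
      have "c \<in> Y" using Z(2) coset_mem[OF gA, of c] c(2) by auto
      then obtain b where b: "b \<in> B" "c = y + b" using y by auto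
      have "Z = (+) y ` ((+) b ` A)" using c b by (auto simp: image_image add.assoc)
      moreover have "(+) b ` A \<in> cosets B A" using b unfolding cosets_def by auto
      ultimately show "Z \<in> (\<lambda>Z. (+) y ` Z) ` cosets B A" by blast
    next
      fix Z assume "Z \<in> (\<lambda>Z. (+) y ` Z) ` cosets B A"
      then obtain b where b: "b \<in> B" "Z = (+) y ` ((+) b ` A)" unfolding cosets_def by auto
      have Z2: "Z = (+) (y + b) ` A" using b by (auto simp: image_image add.assoc)
      have "y + b \<in> C" using grp_add[OF gC y(1)] b BC by auto
      then have "Z \<in> cosets C A" using Z2 unfolding cosets_def by auto
      moreover have "Z \<subseteq> Y"
      proof
        fix z assume "z \<in> Z"
        then obtain a where a: "a \<in> A" "z = y + (b + a)" using Z2 by (auto simp: add.assoc)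
        have "b + a \<in> B" using grp_add[OF gB b(1)] a AB by auto
        then show "z \<in> Y" using a y by auto
      qed
      ultimately show "Z \<in> G Y" unfolding G_def by auto
    qed
    then show ?thesis using card_image[OF translate_inj] by simp
  qed
  have disj: "\<forall>Y1\<in>cosets C B. \<forall>Y2\<in>cosets C B. Y1 \<noteq> Y2 \<longrightarrow> G Y1 \<inter> G Y2 = {}"
  proof (intro ballI impI)
    fix Y1 Y2 assume Y: "Y1 \<in> cosets C B" "Y2 \<in> cosets C B" "Y1 \<noteq> Y2"
    show "G Y1 \<inter> G Y2 = {}"
    proof (rule ccontr)
      assume "G Y1 \<inter> G Y2 \<noteq> {}"
      then obtain Z where Z: "Z \<in> cosets C A" "Z \<subseteq> Y1" "Z \<subseteq> Y2" unfolding G_def by auto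
      then obtain c where c: "Z = (+) c ` A" unfolding cosets_def by auto
      have cZ: "c \<in> Z" using c coset_mem[OF gA] by auto
      obtain y1 y2 where "Y1 = (+) y1 ` B" "Y2 = (+) y2 ` B" using Y unfolding cosets_def by auto
      then have "Y1 = Y2" using coset_disj[OF gB, of c y1 y2] cZ Z by auto
      then show False using Y by simp
    qed
  qed
  have "card (cosets C A) = (\<Sum>Y\<in>cosets C B. card (G Y))"
    unfolding U by (rule card_UN_disjoint[OF finB _ disj]) (auto simp: G_def intro: finite_subset[OF _ fin])
  also have "\<dots> = (\<Sum>Y\<in>cosets C B. card (cosets B A))" using each by simp
  finally show ?thesis by simp
qed

lemma card_cosets_smul:
  assumes "m > 0"
  shows "card (cosets (smul m A) (smul m B)) = card (cosets A B)"
proof -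
  let ?f = "\<lambda>x::rat^'n. of_nat m *s x"
  have eq: "cosets (smul m A) (smul m B) = (\<lambda>Z. ?f ` Z) ` cosets A B"
    unfolding cosets_def smul_def by (auto simp: image_image vector_add_ldistrib)
  have "inj ?f" using assms by (auto intro: injI)
  then have "inj_on (\<lambda>Z. ?f ` Z) (cosets A B)"
    by (intro inj_on_image) (auto intro: inj_on_subset)
  then show ?thesis unfolding eq by (rule card_image)
qed

definition Tset :: "(rat^'n) set \<Rightarrow> nat \<Rightarrow> (rat^'n) set \<Rightarrow> (rat^'n) set" where
  "Tset U m X = {a + b | a b. a \<in> X \<inter> U \<and> b \<in> smul m X}"

lemma grp_T: fixes X U :: "(rat^'n) set" assumes "grp X" "grp U" shows "grp (Tset U m X)"
  unfolding grp_def
proof (intro conjI ballI)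
  have "(0::rat^'n) \<in> X \<inter> U" using assms grp_0 by blast
  moreover have "(0::rat^'n) \<in> smul m X" using grp_0[OF grp_smul[OF assms(1)]] .
  ultimately show "0 \<in> Tset U m X" unfolding Tset_def by force
next
  fix x y assume "x \<in> Tset U m X" "y \<in> Tset U m X"
  then obtain a b c d where abcd: "a \<in> X \<inter> U" "b \<in> smul m X" "c \<in> X \<inter> U" "d \<in> smul m X"
    "x = a + b" "y = c + d" unfolding Tset_def by auto
  have "a + c \<in> X \<inter> U" using abcd grp_add assms by blast
  moreover have "b + d \<in> smul m X" using abcd grp_add[OF grp_smul[OF assms(1)]] by blast
  moreover have "x + y = (a + c) + (b + d)" using abcd by (simp add: algebra_simps)
  ultimately show "x + y \<in> Tset U m X" unfolding Tset_def by blast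
next
  fix x assume "x \<in> Tset U m X"
  then obtain a b where ab: "a \<in> X \<inter> U" "b \<in> smul m X" "x = a + b" unfolding Tset_def by auto
  have "- a \<in> X \<inter> U" using ab grp_neg assms by blast
  moreover have "- b \<in> smul m X" using ab grp_neg[OF grp_smul[OF assms(1)]] by blast
  moreover have "- x = (- a) + (- b)" using ab by simp
  ultimately show "- x \<in> Tset U m X" unfolding Tset_def by blast
qed

lemma smul_sub: assumes "grp X" shows "smul m X \<subseteq> X"
  unfolding smul_def using grp_nat_mult[OF assms] by auto

lemma T_sub: assumes "grp X" shows "Tset U m X \<subseteq> X"
  unfolding Tset_def using smul_sub[OF assms] grp_add[OF assms] by blast

lemma smul_sub_T: fixes X U :: "(rat^'n) set" assumes "grp X" "grp U" shows "smul m X \<subseteq> Tset U m X"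
proof
  fix b assume "b \<in> smul m X"
  moreover have "(0::rat^'n) \<in> X \<inter> U" using assms grp_0 by blast
  moreover have "b = 0 + b" by simp
  ultimately show "b \<in> Tset U m X" unfolding Tset_def by blast
qed

lemma T_mono: "X \<subseteq> Y \<Longrightarrow> Tset U m X \<subseteq> Tset U m Y"
  unfolding Tset_def smul_def by blast

lemma card_T_proj:
  assumes gL: "grp L" and m: "m > 0"
  shows "card (cosets L (Tset {x. P *v x = 0} m L))
       = card (cosets ((\<lambda>x. P *v x) ` L) (smul m ((\<lambda>x. P *v x) ` L)))"
proof -
  let ?U = "{x. P *v x = 0}"
  let ?T = "Tset ?U m L"
  let ?p = "\<lambda>x. P *v x"
  have gT: "grp ?T" using grp_T[OF gL grp_ker] .
  have gPm: "grp (smul m (?p ` L))" using grp_smul[OF grp_image[OF gL]] .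
  have key: "?p ` ((+) x ` ?T) = (+) (P *v x) ` smul m (?p ` L)" for x
  proof (intro equalityI subsetI)
    fix z assume "z \<in> ?p ` ((+) x ` ?T)"
    then obtain a b where ab: "a \<in> L \<inter> ?U" "b \<in> L" "z = P *v (x + (a + of_nat m *s b))"
      unfolding Tset_def smul_def by auto
    then have "z = P *v x + of_nat m *s (P *v b)"
      by (simp add: matrix_vector_right_distrib vector_scalar_commute)
    then show "z \<in> (+) (P *v x) ` smul m (?p ` L)" using ab unfolding smul_def by auto
  next
    fix z assume "z \<in> (+) (P *v x) ` smul m (?p ` L)"
    then obtain b where b: "b \<in> L" "z = P *v x + of_nat m *s (P *v b)" unfolding smul_def by auto
    have "0 \<in> L \<inter> ?U" using grp_0[OF gL] by simp
    then have "0 + of_nat m *s b \<in> ?T" using b unfolding Tset_def smul_def by blast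
    moreover have "z = P *v (x + (0 + of_nat m *s b))"
      using b by (simp add: matrix_vector_right_distrib vector_scalar_commute)
    ultimately show "z \<in> ?p ` ((+) x ` ?T)" by blast
  qed
  have eq: "cosets (?p ` L) (smul m (?p ` L)) = (\<lambda>Z. ?p ` Z) ` cosets L ?T"
    unfolding cosets_def using key by (auto simp: image_image)
  have inj: "inj_on (\<lambda>Z. ?p ` Z) (cosets L ?T)"
  proof (rule inj_onI)
    fix Z1 Z2 assume Z: "Z1 \<in> cosets L ?T" "Z2 \<in> cosets L ?T" "?p ` Z1 = ?p ` Z2"
    then obtain x y where xy: "x \<in> L" "y \<in> L" "Z1 = (+) x ` ?T" "Z2 = (+) y ` ?T"
      unfolding cosets_def by auto
    have "(+) (P *v x) ` smul m (?p ` L) = (+) (P *v y) ` smul m (?p ` L)"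
      using Z(3) xy key by simp
    then have "P *v x - P *v y \<in> smul m (?p ` L)" by (rule coset_eqD[OF gPm])
    then obtain b where b: "b \<in> L" "P *v x - P *v y = of_nat m *s (P *v b)"
      unfolding smul_def by auto
    have "P *v (x - y - of_nat m *s b) = 0"
      using b by (simp add: matrix_vector_mult_diff_distrib vector_scalar_commute)
    moreover have "x - y - of_nat m *s b \<in> L"
      using grp_diff[OF gL grp_diff[OF gL xy(1,2)] grp_nat_mult[OF gL b(1)]] .
    ultimately have "x - y - of_nat m *s b \<in> L \<inter> ?U" by simp
    moreover have "of_nat m *s b \<in> smul m L" using b unfolding smul_def by auto
    moreover have "x - y = (x - y - of_nat m *s b) + of_nat m *s b" by simp
    ultimately have "x - y \<in> ?T" unfolding Tset_def by blast
    then show "Z1 = Z2" using xy coset_eq[OF gT] by simp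
  qed
  show ?thesis unfolding eq by (rule card_image[OF inj, symmetric])
qed

lemma smult_sum: "(c::rat) *s sum f F = sum (\<lambda>x. c *s f x) F"
proof (induction F rule: infinite_finite_induct)
  case (insert x F) then show ?case by (simp add: vector_add_ldistrib)
qed auto

lemma smul_int_span_sub:
  assumes "finite S" "grp Y" "\<And>s. s \<in> S \<Longrightarrow> of_nat m *s s \<in> Y"
  shows "smul m (int_span S) \<subseteq> Y"
proof
  fix y assume "y \<in> smul m (int_span S)"
  then obtain c where c: "y = of_nat m *s (\<Sum>s\<in>S. of_int (c s) *s s)"
    unfolding smul_def int_span_def by auto
  have "y = (\<Sum>s\<in>S. of_int (c s) *s (of_nat m *s s))"
    unfolding c smult_sum by (simp add: vector_smult_assoc mult.commute)
  also have "\<dots> \<in> Y" using assms by (intro grp_sum grp_int_mult) auto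
  finally show "y \<in> Y" .
qed

lemma fg_reps:
  fixes S :: "(rat^'n) set"
  assumes "finite S" "m > 0"
  shows "\<exists>R. finite R \<and> R \<subseteq> int_span S \<and> (\<forall>y\<in>int_span S. \<exists>r\<in>R. y - r \<in> smul m (int_span S))"
proof -
  define R where "R = (\<lambda>d. \<Sum>s\<in>S. of_int (d s) *s s) ` (S \<rightarrow>\<^sub>E {0..<int m})"
  have "finite R" unfolding R_def using assms(1) by (intro finite_imageI finite_PiE) auto
  moreover have "R \<subseteq> int_span S" unfolding R_def int_span_def by auto
  moreover have "\<exists>r\<in>R. y - r \<in> smul m (int_span S)" if y: "y \<in> int_span S" for y
  proof -
    obtain c where c: "y = (\<Sum>s\<in>S. of_int (c s) *s s)" using y unfolding int_span_def by auto
    define d where "d = restrict (\<lambda>s. c s mod int m) S"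
    have dP: "d \<in> S \<rightarrow>\<^sub>E {0..<int m}" unfolding d_def using assms(2) by auto
    define r where "r = (\<Sum>s\<in>S. of_int (d s) *s s)"
    have rR: "r \<in> R" unfolding r_def R_def using dP by blast
    have trm: "of_int (c s) *s s - of_int (c s mod int m) *s s = of_nat m *s (of_int (c s div int m) *s s)"
      for s :: "rat^'n"
    proof -
      have "c s - c s mod int m = int m * (c s div int m)" by (simp add: minus_mod_eq_mult_div)
      then have "(of_int (c s) :: rat) - of_int (c s mod int m) = of_nat m * of_int (c s div int m)"
        by (metis of_int_diff of_int_mult of_int_of_nat_eq)
      then show ?thesis by (simp add: vector_sub_rdistrib[symmetric] vector_smult_assoc)
    qed
    have "y - r = (\<Sum>s\<in>S. of_int (c s) *s s - of_int (c s mod int m) *s s)"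
      unfolding c r_def d_def by (simp add: sum_subtractf)
    also have "\<dots> = of_nat m *s (\<Sum>s\<in>S. of_int (c s div int m) *s s)"
      unfolding trm smult_sum ..
    also have "\<dots> \<in> smul m (int_span S)" unfolding smul_def by (rule imageI, rule int_span_memI)
    finally show ?thesis using rR by blast
  qed
  ultimately show ?thesis by blast
qed

lemma denom_exists: "finite F \<Longrightarrow> \<exists>d::nat. d > 0 \<and> (\<forall>r\<in>F. of_nat d * (r::rat) \<in> \<int>)"
proof (induction F rule: finite_induct)
  case empty then show ?case by (intro exI[of _ 1]) simp
next
  case (insert r F)
  then obtain d where d: "d > 0" "\<forall>r\<in>F. of_nat d * (r::rat) \<in> \<int>" by blast
  obtain a b where ab: "quotient_of r = (a, b)" by (cases "quotient_of r")
  have b: "b > 0" using quotient_of_denom_pos[OF ab] .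
  have rb: "of_int b * r = of_int a" using quotient_of_div[OF ab] b by simp
  define e where "e = d * nat b"
  have "e > 0" unfolding e_def using d b by simp
  moreover have "of_nat e * r \<in> \<int>"
  proof -
    have "of_nat e * r = of_nat d * (of_int b * r)" unfolding e_def using b by simp
    then show ?thesis unfolding rb by simp
  qed
  moreover have "\<forall>s\<in>F. of_nat e * s \<in> \<int>"
  proof
    fix s assume "s \<in> F"
    then have "of_nat d * s \<in> \<int>" using d by blast
    moreover have "of_nat e * s = of_int b * (of_nat d * s)" unfolding e_def using b by simp
    ultimately show "of_nat e * s \<in> \<int>" by (metis Ints_mult Ints_of_int)
  qed
  ultimately show ?case by blast
qed

lemma lattice_absorb1:
  assumes "is_lattice L" shows "\<exists>m>0. of_nat m *s v \<in> L"
proof -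
  obtain B where B: "B \<subseteq> L" "vec.independent B" "vec.span B = UNIV"
    using assms unfolding is_lattice_def by blast
  have fB: "finite B" using vec.finiteI_independent[OF B(2)] .
  have gL: "grp L" using lattice_grp[OF assms] .
  have "v \<in> vec.span B" using B(3) by simp
  then obtain u where u: "v = (\<Sum>b\<in>B. u b *s b)" unfolding vec.span_finite[OF fB] by auto
  obtain d where d: "d > 0" "\<forall>r\<in>u ` B. of_nat d * r \<in> \<int>" using denom_exists[of "u ` B"] fB by blast
  have "\<forall>b\<in>B. \<exists>k. of_nat d * u b = of_int k" using d(2) by (auto elim!: Ints_cases)
  then obtain k where k: "\<And>b. b \<in> B \<Longrightarrow> of_nat d * u b = of_int (k b)" by metis
  have "of_nat d *s v = (\<Sum>b\<in>B. (of_nat d * u b) *s b)"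
    unfolding u smult_sum by (simp add: vector_smult_assoc)
  also have "\<dots> = (\<Sum>b\<in>B. of_int (k b) *s b)" using k by (intro sum.cong) auto
  also have "\<dots> \<in> L" using B(1) fB by (intro grp_sum[OF gL] grp_int_mult[OF gL]) auto
  finally show ?thesis using d(1) by blast
qed

lemma lattice_absorb:
  assumes "is_lattice L" "finite W" shows "\<exists>m>0. \<forall>v\<in>W. of_nat m *s v \<in> L"
  using assms(2)
proof (induction W rule: finite_induct)
  case empty then show ?case by (intro exI[of _ 1]) simp
next
  case (insert w W)
  then obtain m where m: "m > 0" "\<forall>v\<in>W. of_nat m *s v \<in> L" by blast
  obtain m' where m': "m' > 0" "of_nat m' *s w \<in> L" using lattice_absorb1[OF assms(1)] by blast
  have gL: "grp L" using lattice_grp[OF assms(1)] .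
  have "of_nat (m * m') *s v \<in> L" if "v \<in> insert w W" for v
  proof (cases "v = w")
    case True
    have e: "of_nat (m * m') *s v = of_nat m *s (of_nat m' *s w)" using True by (simp add: vector_smult_assoc)
    show ?thesis unfolding e by (rule grp_nat_mult[OF gL m'(2)])
  next
    case False
    then have "v \<in> W" using that by simp
    have e: "of_nat (m * m') *s v = of_nat m' *s (of_nat m *s v)" by (simp add: vector_smult_assoc mult.commute)
    show ?thesis unfolding e by (rule grp_nat_mult[OF gL]) (use m(2) \<open>v \<in> W\<close> in blast)
  qed
  then show ?case using m m' by (intro exI[of _ "m * m'"]) simp
qed

lemma fg_into_lattice:
  assumes "finite S" "is_lattice L" shows "\<exists>m>0. smul m (int_span S) \<subseteq> L"
proof -
  obtain m where "m > 0" "\<forall>v\<in>S. of_nat m *s v \<in> L" using lattice_absorb[OF assms(2,1)] by blast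
  then show ?thesis using smul_int_span_sub[OF assms(1) lattice_grp[OF assms(2)]] by blast
qed

lemma lattice_quot_finite:
  assumes "is_lattice E" "is_lattice L" shows "finite (cosets L E)"
proof -
  obtain S where S: "finite S" "L = int_span S" using assms(2) unfolding is_lattice_def by blast
  obtain m where m: "m > 0" "smul m (int_span S) \<subseteq> E" using fg_into_lattice[OF S(1) assms(1)] by blast
  obtain R where R: "finite R" "\<forall>y\<in>int_span S. \<exists>r\<in>R. y - r \<in> smul m (int_span S)"
    using fg_reps[OF S(1) m(1)] by blast
  show ?thesis unfolding S(2) using R m(2)
    by (intro finite_cosets_reps[OF lattice_grp[OF assms(1)] R(1)]) blast
qed

lemma finite_cosets_image:
  assumes "finite S" "grp X" "k > 0" "smul k ((\<lambda>x. P *v x) ` int_span S) \<subseteq> X"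
  shows "finite (cosets ((\<lambda>x. P *v x) ` int_span S) X)"
proof -
  obtain R where R: "finite R" "\<forall>y\<in>int_span S. \<exists>r\<in>R. y - r \<in> smul k (int_span S)"
    using fg_reps[OF assms(1,3)] by blast
  show ?thesis
  proof (rule finite_cosets_reps[OF assms(2) finite_imageI[OF R(1), of "\<lambda>x. P *v x"]])
    fix y assume "y \<in> (\<lambda>x. P *v x) ` int_span S"
    then obtain x where x: "x \<in> int_span S" "y = P *v x" by auto
    then obtain r where r: "r \<in> R" "x - r \<in> smul k (int_span S)" using R(2) by blast
    then obtain z where z: "z \<in> int_span S" "x - r = of_nat k *s z" unfolding smul_def by auto
    have "y - P *v r = of_nat k *s (P *v z)"
      using x z by (metis matrix_vector_mult_diff_distrib vector_scalar_commute)
    moreover have "of_nat k *s (P *v z) \<in> smul k ((\<lambda>x. P *v x) ` int_span S)"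
      using z unfolding smul_def by auto
    ultimately have "y - P *v r \<in> X" using assms(4) by (metis subsetD)
    then show "\<exists>r\<in>(\<lambda>x. P *v x) ` R. y - r \<in> X" using r(1) by blast
  qed
qed

lemma full_of_span:
  assumes "X \<subseteq> L" "vec.span X = UNIV"
  shows "\<exists>B\<subseteq>L. vec.independent B \<and> vec.span B = UNIV"
proof -
  obtain B where B: "B \<subseteq> X" "vec.independent B" "X \<subseteq> vec.span B"
    by (rule vec.maximal_independent_subset[of X])
  have "vec.span X \<subseteq> vec.span B" using B(3) by (simp add: vec.span_minimal vec.subspace_span)
  then have "vec.span B = UNIV" using assms(2) by auto
  then show ?thesis using B assms(1) by blast
qed

lemma T_lattice:
  assumes E: "is_lattice E" and m: "m > 0" and gU: "grp U"
  shows "is_lattice (Tset U m E)"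
proof -
  let ?T = "Tset U m E"
  obtain S where S: "finite S" "E = int_span S" using E unfolding is_lattice_def by blast
  have gE: "grp E" using lattice_grp[OF E] .
  have gT: "grp ?T" using grp_T[OF gE gU] .
  obtain R where R: "finite R" "R \<subseteq> int_span S" "\<forall>y\<in>int_span S. \<exists>r\<in>R. y - r \<in> smul m (int_span S)"
    using fg_reps[OF S(1) m] by blast
  define G where "G = (\<lambda>x. of_nat m *s x) ` S \<union> (R \<inter> ?T)"
  have fG: "finite G" unfolding G_def using S(1) R(1) by simp
  have mS: "of_nat m *s s \<in> ?T" if "s \<in> S" for s
  proof -
    have "of_nat m *s s \<in> smul m E" unfolding smul_def S(2) using int_span_gen[OF S(1) that] by blast
    then show ?thesis using smul_sub_T[OF gE gU] by blast
  qed
  have "int_span G = ?T"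
  proof
    have "G \<subseteq> ?T" unfolding G_def using mS by blast
    then show "int_span G \<subseteq> ?T" by (rule int_span_least[OF gT])
  next
    show "?T \<subseteq> int_span G"
    proof
      fix x assume x: "x \<in> ?T"
      then have "x \<in> E" using T_sub[OF gE] by blast
      then obtain r where r: "r \<in> R" "x - r \<in> smul m E" using R(3) S(2) by blast
      have "x - r \<in> ?T" using r(2) smul_sub_T[OF gE gU] by blast
      then have "x - (x - r) \<in> ?T" using grp_diff[OF gT x] by blast
      then have "r \<in> ?T" by simp
      then have rG: "r \<in> int_span G" using int_span_gen[OF fG] r(1) unfolding G_def by blast
      have "smul m (int_span S) \<subseteq> int_span G"
        by (rule smul_int_span_sub[OF S(1) int_span_grp]) (use int_span_gen[OF fG] in \<open>auto simp: G_def\<close>)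
      then have "x - r \<in> int_span G" using r(2) S(2) by blast
      then have "r + (x - r) \<in> int_span G" using grp_add[OF int_span_grp rG] by blast
      then show "x \<in> int_span G" by simp
    qed
  qed
  moreover have "\<exists>B\<subseteq>?T. vec.independent B \<and> vec.span B = UNIV"
  proof -
    obtain B where B: "B \<subseteq> E" "vec.independent B" "vec.span B = UNIV"
      using E unfolding is_lattice_def by blast
    let ?X = "(\<lambda>x. of_nat m *s x) ` B"
    have XT: "?X \<subseteq> ?T" using B(1) smul_sub_T[OF gE gU] unfolding smul_def by blast
    have "B \<subseteq> vec.span ?X"
    proof
      fix b assume "b \<in> B"
      then have "of_nat m *s b \<in> vec.span ?X" by (intro vec.span_base imageI)
      then have "(inverse (of_nat m)) *s (of_nat m *s b) \<in> vec.span ?X" by (rule vec.span_scale)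
      then show "b \<in> vec.span ?X" using m by (simp add: vector_smult_assoc)
    qed
    then have "vec.span B \<subseteq> vec.span ?X" by (simp add: vec.span_minimal vec.subspace_span)
    then have "vec.span ?X = UNIV" using B(3) by auto
    then show ?thesis using full_of_span[OF XT] by blast
  qed
  moreover have "\<exists>S. finite S \<and> ?T = int_span S" using fG calculation(1) by metis
  ultimately show ?thesis unfolding is_lattice_def by blast
qed

lemma nat_cancel_aux: "(x::nat) > 0 \<Longrightarrow> a * x = x * z \<Longrightarrow> z = a"
  by (simp add: mult.commute)

lemma nat_cancel_aux2: "(a::nat) > 0 \<Longrightarrow> a * x = y * a \<Longrightarrow> x = y"
  by (simp add: mult.commute)

lemma card_T:
  assumes E: "is_lattice E" and L: "is_lattice L" and EL: "E \<subseteq> L" and m: "m > 0"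
  shows "card (cosets (Tset {x. P *v x = 0} m L) (Tset {x. P *v x = 0} m E)) = card (cosets L E)"
proof -
  let ?U = "{x. P *v x = 0}"
  let ?p = "\<lambda>x. P *v x"
  let ?TE = "Tset ?U m E" and ?TL = "Tset ?U m L"
  have gE: "grp E" and gL: "grp L" using lattice_grp E L by auto
  have gU: "grp ?U" by (rule grp_ker)
  have TEl: "is_lattice ?TE" and TLl: "is_lattice ?TL" using T_lattice[OF _ m gU] E L by auto
  have gTE: "grp ?TE" and gTL: "grp ?TL" using grp_T gE gL gU by auto
  have TEE: "?TE \<subseteq> E" and TLL: "?TL \<subseteq> L" using T_sub gE gL by auto
  have TETL: "?TE \<subseteq> ?TL" using T_mono[OF EL] .
  have t1: "card (cosets L ?TE) = card (cosets L E) * card (cosets E ?TE)"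
    by (rule tower[OF gTE gE gL TEE EL lattice_quot_finite[OF TEl L]])
  have t2: "card (cosets L ?TE) = card (cosets L ?TL) * card (cosets ?TL ?TE)"
    by (rule tower[OF gTE gTL gL TETL TLL lattice_quot_finite[OF TEl L]])
  have p1: "card (cosets E ?TE) = card (cosets (?p ` E) (smul m (?p ` E)))"
    by (rule card_T_proj[OF gE m])
  have p2: "card (cosets L ?TL) = card (cosets (?p ` L) (smul m (?p ` L)))"
    by (rule card_T_proj[OF gL m])
  obtain S where S: "finite S" "L = int_span S" using L unfolding is_lattice_def by blast
  obtain d where d: "d > 0" "smul d (int_span S) \<subseteq> E" using fg_into_lattice[OF S(1) E] by blast
  have gPE: "grp (?p ` E)" and gPL: "grp (?p ` L)" using grp_image gE gL by auto
  have gmPE: "grp (smul m (?p ` E))" and gmPL: "grp (smul m (?p ` L))" using grp_smul gPE gPL by auto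
  have PEL: "?p ` E \<subseteq> ?p ` L" using EL by auto
  have mPE: "smul m (?p ` E) \<subseteq> ?p ` E" by (rule smul_sub[OF gPE])
  have mPL: "smul m (?p ` L) \<subseteq> ?p ` L" by (rule smul_sub[OF gPL])
  have mPEL: "smul m (?p ` E) \<subseteq> smul m (?p ` L)" unfolding smul_def by (rule image_mono[OF PEL])
  have small: "smul (m * d) (?p ` L) \<subseteq> smul m (?p ` E)"
  proof
    fix z assume "z \<in> smul (m * d) (?p ` L)"
    then obtain x where x: "x \<in> L" "z = of_nat (m * d) *s (P *v x)" unfolding smul_def by auto
    have "of_nat d *s x \<in> E" using d(2) x(1) S(2) unfolding smul_def by auto
    moreover have "z = of_nat m *s (P *v (of_nat d *s x))"
      using x(2) by (simp add: vector_scalar_commute vector_smult_assoc)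
    ultimately show "z \<in> smul m (?p ` E)" unfolding smul_def by blast
  qed
  have md: "m * d > 0" using m d by simp
  have finA: "finite (cosets (?p ` L) (smul m (?p ` E)))"
    unfolding S(2) by (rule finite_cosets_image[OF S(1) gmPE md]) (use small S(2) in simp)
  have finB: "finite (cosets (?p ` L) (?p ` E))"
    unfolding S(2) by (rule finite_cosets_image[OF S(1) gPE md]) (use small mPE S(2) in auto)
  have t3: "card (cosets (?p ` L) (smul m (?p ` E))) = card (cosets (?p ` L) (?p ` E)) * card (cosets (?p ` E) (smul m (?p ` E)))"
    by (rule tower[OF gmPE gPE gPL mPE PEL finA])
  have t4: "card (cosets (?p ` L) (smul m (?p ` E))) = card (cosets (?p ` L) (smul m (?p ` L))) * card (cosets (smul m (?p ` L)) (smul m (?p ` E)))"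
    by (rule tower[OF gmPE gmPL gPL mPEL mPL finA])
  have s: "card (cosets (smul m (?p ` L)) (smul m (?p ` E))) = card (cosets (?p ` L) (?p ` E))"
    by (rule card_cosets_smul[OF m])
  have apos: "card (cosets (?p ` L) (?p ` E)) > 0"
    by (rule card_cosets_pos[OF finB]) (use grp_0[OF gL] in auto)
  have xy: "card (cosets (?p ` E) (smul m (?p ` E))) = card (cosets (?p ` L) (smul m (?p ` L)))"
  proof -
    have "card (cosets (?p ` L) (?p ` E)) * card (cosets (?p ` E) (smul m (?p ` E)))
        = card (cosets (?p ` L) (smul m (?p ` L))) * card (cosets (?p ` L) (?p ` E))"
      using t3 t4 unfolding s by (rule trans[OF sym])
    then show ?thesis by (rule nat_cancel_aux2[OF apos])
  qed
  have xpos: "card (cosets E ?TE) > 0"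
    by (rule card_cosets_pos[OF lattice_quot_finite[OF TEl E]]) (use grp_0[OF gE] in auto)
  have e1: "card (cosets L E) * card (cosets E ?TE) = card (cosets L ?TL) * card (cosets ?TL ?TE)"
    using t1 t2 by (rule trans[OF sym])
  have e2: "card (cosets L ?TL) = card (cosets E ?TE)" unfolding p1 p2 xy ..
  have "card (cosets L E) * card (cosets E ?TE) = card (cosets E ?TE) * card (cosets ?TL ?TE)"
    using e1 unfolding e2 .
  then show ?thesis by (rule nat_cancel_aux[OF xpos])
qed

definition mpow :: "rat^'n^'n \<Rightarrow> nat \<Rightarrow> rat^'n^'n" where
  "mpow D k = ((\<lambda>X. X ** D) ^^ k) (mat 1)"

lemma mpow_0: "mpow D 0 = mat 1" by (simp add: mpow_def)
lemma mpow_Suc: "mpow D (Suc k) = mpow D k ** D" by (simp add: mpow_def)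

lemma mpow_comm: assumes "g ** D = D ** g" shows "g ** mpow D k = mpow D k ** g"
proof (induction k)
  case 0 then show ?case by (simp add: mpow_0 matrix_mul_lid matrix_mul_rid)
next
  case (Suc k)
  have "g ** mpow D (Suc k) = (g ** mpow D k) ** D" by (simp add: mpow_Suc matrix_mul_assoc)
  also have "\<dots> = mpow D k ** (g ** D)" using Suc by (simp add: matrix_mul_assoc)
  also have "\<dots> = mpow D (Suc k) ** g" using assms by (simp add: mpow_Suc matrix_mul_assoc)
  finally show ?case .
qed

lemma mpow_Suc_vec: "mpow D (Suc k) *v x = mpow D k *v (D *v x)"
  by (simp add: mpow_Suc matrix_vector_mul_assoc)

lemma matrix_mul_lneg': "(- A) ** (B::rat^'n^'n) = - (A ** B)"
  by (simp add: matrix_matrix_mult_def vec_eq_iff sum_negf)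

lemma matrix_add_rdistrib': "((A::rat^'n^'n) + B) ** C = A ** C + B ** C"
  by (simp add: matrix_matrix_mult_def vec_eq_iff sum.distrib distrib_right)

lemma mpow_mult: assumes "X ** N = N ** X" shows "mpow (X ** N) k = mpow X k ** mpow N k"
proof (induction k)
  case 0 then show ?case by (simp add: mpow_0 matrix_mul_lid)
next
  case (Suc k)
  have c: "mpow N k ** X = X ** mpow N k" using mpow_comm[OF assms, of k] by simp
  have "mpow (X ** N) (Suc k) = mpow X k ** (mpow N k ** X) ** N"
    by (simp add: mpow_Suc Suc matrix_mul_assoc)
  also have "\<dots> = (mpow X k ** X) ** (mpow N k ** N)" unfolding c by (simp add: matrix_mul_assoc)
  finally show ?case by (simp add: mpow_Suc)
qed

lemma int_span_map:
  assumes "finite S" "grp Y" "\<And>s. s \<in> S \<Longrightarrow> A *v s \<in> Y" "x \<in> int_span S"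
  shows "A *v x \<in> Y"
proof -
  obtain c where c: "x = (\<Sum>s\<in>S. of_int (c s) *s s)" using assms(4) unfolding int_span_def by auto
  have "A *v x = (\<Sum>s\<in>S. of_int (c s) *s (A *v s))" unfolding c by (simp add: vec.sum vector_scalar_commute)
  also have "\<dots> \<in> Y" using assms by (intro grp_sum grp_int_mult) auto
  finally show ?thesis .
qed

primrec iterT :: "rat^'n^'n \<Rightarrow> nat \<Rightarrow> nat \<Rightarrow> (rat^'n) set \<Rightarrow> nat \<Rightarrow> (rat^'n) set" where
  "iterT D r m X 0 = X"
| "iterT D r m X (Suc j) = Tset {x. mpow D (r - j) *v x = 0} m (iterT D r m X j)"

lemma construction:
  fixes g D :: "rat^'n^'n"
  assumes comm: "g ** D = D ** g" and nil: "mpow D r = 0"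
    and E: "is_lattice E" and L: "is_lattice L" and EL: "E \<subseteq> L" and gEL: "(\<lambda>x. g *v x) ` E \<subseteq> L"
  shows "\<exists>E' L'. is_lattice E' \<and> is_lattice L' \<and> E' \<subseteq> L' \<and> (\<lambda>x. (g + D) *v x) ` E' \<subseteq> L'
          \<and> lattice_index L' E' = lattice_index L E"
proof -
  obtain S where S: "finite S" "E = int_span S" using E unfolding is_lattice_def by blast
  have gL: "grp L" using lattice_grp[OF L] .
  obtain m where m: "m > 0" "\<forall>v\<in>(\<lambda>s. D *v s) ` S. of_nat m *s v \<in> L"
    using lattice_absorb[OF L, of "(\<lambda>s. D *v s) ` S"] S(1) by blast
  have mDE: "of_nat m *s (D *v x) \<in> L" if xE: "x \<in> E" for x
  proof -
    obtain c where c: "x = (\<Sum>s\<in>S. of_int (c s) *s s)" using xE S(2) unfolding int_span_def by auto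
    have "of_nat m *s (D *v x) = (\<Sum>s\<in>S. of_int (c s) *s (of_nat m *s (D *v s)))"
      unfolding c by (simp add: vec.sum vector_scalar_commute smult_sum vector_smult_assoc mult.commute)
    also have "\<dots> \<in> L" using m(2) S(1) by (intro grp_sum[OF gL] grp_int_mult[OF gL]) auto
    finally show ?thesis .
  qed
  define U where "U j = {x. mpow D (r - j) *v x = 0}" for j
  define F where "F j = iterT D r m E j" for j
  define G where "G j = iterT D r m L j" for j
  have F0: "F 0 = E" and G0: "G 0 = L" unfolding F_def G_def by simp_all
  have FS: "F (Suc j) = Tset (U j) m (F j)" and GS: "G (Suc j) = Tset (U j) m (G j)" for j
    unfolding F_def G_def U_def by simp_all
  have gU: "grp (U j)" for j unfolding U_def by (rule grp_ker)
  have gpres: "g *v x \<in> U j" if "x \<in> U j" for x j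
  proof -
    have "mpow D (r - j) *v (g *v x) = g *v (mpow D (r - j) *v x)"
      by (simp add: matrix_vector_mul_assoc mpow_comm[OF comm])
    then show ?thesis using that unfolding U_def by simp
  qed
  have Dmap: "D *v x \<in> U (Suc j)" if "x \<in> U j" for x j
  proof (cases "r - j")
    case 0
    then have "x = 0" using that unfolding U_def by (simp add: mpow_0 matrix_vector_mul_lid)
    then show ?thesis unfolding U_def by simp
  next
    case (Suc k)
    then have "r - Suc j = k" by simp
    then show ?thesis using that Suc unfolding U_def by (simp add: mpow_Suc_vec)
  qed
  have U0: "U 0 = UNIV"
    unfolding U_def using nil by simp
  have Ur: "U r = {0}" unfolding U_def by (auto simp: mpow_0 matrix_vector_mul_lid)
  have inv: "is_lattice (F j) \<and> is_lattice (G j) \<and> F j \<subseteq> G j \<and> (\<lambda>x. g *v x) ` F j \<subseteq> G j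
          \<and> card (cosets (G j) (F j)) = card (cosets L E)" for j
  proof (induction j)
    case 0 then show ?case using E L EL gEL F0 G0 by simp
  next
    case (Suc j)
    then have IH: "is_lattice (F j)" "is_lattice (G j)" "F j \<subseteq> G j" "(\<lambda>x. g *v x) ` F j \<subseteq> G j"
      "card (cosets (G j) (F j)) = card (cosets L E)" by auto
    have l1: "is_lattice (F (Suc j))" unfolding FS by (rule T_lattice[OF IH(1) m(1) gU])
    have l2: "is_lattice (G (Suc j))" unfolding GS by (rule T_lattice[OF IH(2) m(1) gU])
    have sub: "F (Suc j) \<subseteq> G (Suc j)" unfolding FS GS by (rule T_mono[OF IH(3)])
    have gsub: "(\<lambda>x. g *v x) ` F (Suc j) \<subseteq> G (Suc j)"
    proof
      fix y assume "y \<in> (\<lambda>x. g *v x) ` F (Suc j)"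
      then obtain a b where ab: "a \<in> F j \<inter> U j" "b \<in> F j" "y = g *v (a + of_nat m *s b)"
        unfolding FS Tset_def smul_def by auto
      have "g *v a \<in> G j \<inter> U j" using ab(1) IH(4) gpres by blast
      moreover have "of_nat m *s (g *v b) \<in> smul m (G j)" using ab(2) IH(4) unfolding smul_def by blast
      moreover have "y = g *v a + of_nat m *s (g *v b)"
        using ab(3) by (simp add: matrix_vector_right_distrib vector_scalar_commute)
      ultimately show "y \<in> G (Suc j)" unfolding GS Tset_def by blast
    qed
    have "card (cosets (G (Suc j)) (F (Suc j))) = card (cosets (G j) (F j))"
      unfolding FS GS U_def by (rule card_T[OF IH(1) IH(2) IH(3) m(1)])
    then show ?case using l1 l2 sub gsub IH(5) by simp
  qed
  have C: "\<forall>x\<in>F j. of_nat m *s (D *v x) \<in> G (Suc j)" for j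
  proof (induction j)
    case 0
    show ?case
    proof
      fix x assume "x \<in> F 0"
      then have "of_nat m *s (D *v x) \<in> G 0 \<inter> U 0" using mDE F0 G0 U0 by simp
      moreover have "0 \<in> smul m (G 0)" using grp_0[OF grp_smul[OF gL]] G0 by simp
      moreover have "of_nat m *s (D *v x) = of_nat m *s (D *v x) + 0" by simp
      ultimately show "of_nat m *s (D *v x) \<in> G (Suc 0)" unfolding GS Tset_def by blast
    qed
  next
    case (Suc j)
    show ?case
    proof
      fix x assume "x \<in> F (Suc j)"
      then obtain a b where ab: "a \<in> F j \<inter> U j" "b \<in> F j" "x = a + of_nat m *s b"
        unfolding FS Tset_def smul_def by auto
      have gU': "grp (U (Suc j))" by (rule gU)
      have "of_nat m *s (D *v a) \<in> G (Suc j)" using Suc ab(1) by blast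
      moreover have "of_nat m *s (D *v a) \<in> U (Suc j)"
        using grp_nat_mult[OF gU' Dmap] ab(1) by blast
      moreover have "of_nat m *s (of_nat m *s (D *v b)) \<in> smul m (G (Suc j))"
        using Suc ab(2) unfolding smul_def by blast
      moreover have "of_nat m *s (D *v x) = of_nat m *s (D *v a) + of_nat m *s (of_nat m *s (D *v b))"
        using ab(3) by (simp add: matrix_vector_right_distrib vector_scalar_commute vector_add_ldistrib)
      ultimately show "of_nat m *s (D *v x) \<in> G (Suc (Suc j))" unfolding GS[of "Suc j"] Tset_def by blast
    qed
  qed
  have DF: "D *v x \<in> G r" if "x \<in> F r" for x
  proof -
    have "of_nat m *s (D *v x) \<in> G (Suc r)" using C that by blast
    then obtain a b where ab: "a \<in> G r \<inter> U r" "b \<in> G r" "of_nat m *s (D *v x) = a + of_nat m *s b"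
      unfolding GS Tset_def smul_def by auto
    then have "a = 0" using Ur by auto
    then have "of_nat m *s (D *v x) = of_nat m *s b" using ab(3) by simp
    then have "D *v x = b" using m(1) by simp
    then show ?thesis using ab(2) by simp
  qed
  have gGr: "grp (G r)" using lattice_grp inv by blast
  have "(\<lambda>x. (g + D) *v x) ` F r \<subseteq> G r"
  proof
    fix y assume "y \<in> (\<lambda>x. (g + D) *v x) ` F r"
    then obtain x where x: "x \<in> F r" "y = g *v x + D *v x" by (auto simp: matrix_vector_mult_add_rdistrib)
    have "g *v x \<in> G r" using inv x(1) by blast
    then show "y \<in> G r" using grp_add[OF gGr _ DF[OF x(1)]] x(2) by simp
  qed
  then show ?thesis using inv[of r] unfolding lattice_index_def cosets_def by (intro exI[of _ "F r"] exI[of _ "G r"]) auto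
qed

lemma pair_exists:
  fixes g :: "rat^'n^'n"
  shows "\<exists>k E L. is_lattice E \<and> is_lattice L \<and> E \<subseteq> L \<and> (\<lambda>x. g *v x) ` E \<subseteq> L \<and> k = lattice_index L E"
proof -
  define B0 :: "(rat^'n) set" where "B0 = range (\<lambda>i. axis i (1::rat))"
  have fB0: "finite B0" unfolding B0_def by simp
  have spB0: "vec.span B0 = UNIV"
  proof -
    have "x \<in> vec.span B0" for x :: "rat^'n"
    proof -
      have "x = (\<Sum>i\<in>UNIV. (x$i) *s axis i 1)" by (rule basis_expansion[symmetric])
      also have "\<dots> \<in> vec.span B0"
        by (intro vec.span_sum vec.span_scale vec.span_base) (auto simp: B0_def)
      finally show ?thesis .
    qed
    then show ?thesis by auto
  qed
  define E0 where "E0 = int_span B0"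
  define L0 where "L0 = int_span (B0 \<union> (\<lambda>x. g *v x) ` B0)"
  have fL: "finite (B0 \<union> (\<lambda>x. g *v x) ` B0)" using fB0 by simp
  have B0E: "B0 \<subseteq> E0" unfolding E0_def using int_span_gen[OF fB0] by blast
  have B0L: "B0 \<subseteq> L0" unfolding L0_def using int_span_gen[OF fL] by blast
  have lE: "is_lattice E0" unfolding is_lattice_def
    using fB0 full_of_span[OF B0E spB0] unfolding E0_def by blast
  have lL: "is_lattice L0" unfolding is_lattice_def
    using fL full_of_span[OF B0L spB0] unfolding L0_def by blast
  have EL: "E0 \<subseteq> L0" unfolding E0_def by (rule int_span_least[OF _ B0L]) (simp add: L0_def int_span_grp)
  have gEL: "(\<lambda>x. g *v x) ` E0 \<subseteq> L0"
  proof
    fix y assume "y \<in> (\<lambda>x. g *v x) ` E0"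
    then obtain x where x: "x \<in> int_span B0" "y = g *v x" unfolding E0_def by auto
    have "g *v x \<in> L0"
      by (rule int_span_map[OF fB0 int_span_grp[of "B0 \<union> (\<lambda>x. g *v x) ` B0", folded L0_def] _ x(1)])
         (use int_span_gen[OF fL] in \<open>auto simp: L0_def\<close>)
    then show "y \<in> L0" using x by simp
  qed
  show ?thesis using lE lL EL gEL by blast
qed

lemma ht_le:
  fixes g D :: "rat^'n^'n"
  assumes "g ** D = D ** g" "mpow D r = 0"
  shows "ht (g + D) \<le> ht g"
proof -
  let ?P = "\<lambda>g k. \<exists>E L. is_lattice E \<and> is_lattice L \<and> E \<subseteq> L \<and> (\<lambda>x. g *v x) ` E \<subseteq> L \<and> k = lattice_index L E"
  have ex: "\<exists>k. ?P g k" using pair_exists[of g] by blast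
  have "?P g (LEAST k. ?P g k)" using LeastI_ex[OF ex] .
  then obtain E L where EL: "is_lattice E" "is_lattice L" "E \<subseteq> L" "(\<lambda>x. g *v x) ` E \<subseteq> L"
    "(LEAST k. ?P g k) = lattice_index L E" by metis
  obtain E' L' where E'L': "is_lattice E'" "is_lattice L'" "E' \<subseteq> L'" "(\<lambda>x. (g + D) *v x) ` E' \<subseteq> L'"
    "lattice_index L' E' = lattice_index L E"
    using construction[OF assms EL(1-4)] by blast
  have "?P (g + D) (LEAST k. ?P g k)" using E'L' EL(5) by metis
  then have "(LEAST k. ?P (g + D) k) \<le> (LEAST k. ?P g k)" by (rule Least_le)
  then show ?thesis unfolding ht_def .
qed

theorem lemma13:
  fixes h hs hu :: "rat^'n^'n"
  assumes "invertible h"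
    and "h = hs ** hu"
    and "hs ** hu = hu ** hs"
    and "semisimple hs"
    and "unipotent hu"
  shows "ht h = ht hs"
proof -
  define N where "N = hu - mat 1"
  have huN: "hu = N + mat 1" unfolding N_def by simp
  have hN: "h = hs + hs ** N" using assms(2) unfolding huN by (simp add: matrix_add_ldistrib matrix_mul_rid add.commute)
  have "hs ** N + hs = N ** hs + hs"
    using assms(3) unfolding huN by (simp add: matrix_add_ldistrib matrix_add_rdistrib' matrix_mul_rid matrix_mul_lid)
  then have cN: "hs ** N = N ** hs" by simp
  obtain k where k: "mpow N k = 0" using assms(5) unfolding unipotent_def mpow_def N_def by blast
  define D where "D = hs ** N"
  have nilD: "mpow D k = 0" unfolding D_def mpow_mult[OF cN] k by (simp add: times0_right)
  have cD: "hs ** D = D ** hs" unfolding D_def using cN by (simp add: matrix_mul_assoc)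
  have le1: "ht h \<le> ht hs" using ht_le[OF cD nilD] hN unfolding D_def by simp
  have cN': "(- hs) ** N = N ** (- hs)"
    using cN by (simp add: matrix_mul_lneg' matrix_matrix_mult_def vec_eq_iff sum_negf)
  have nilD': "mpow ((- hs) ** N) k = 0" unfolding mpow_mult[OF cN'] k by (simp add: times0_right)
  have D'eq: "(- hs) ** N = - D" unfolding D_def by (rule matrix_mul_lneg')
  have cD2: "h ** (- D) = (- D) ** h"
  proof -
    have "h ** D = D ** h" unfolding hN D_def using cN
      by (simp add: matrix_add_ldistrib matrix_add_rdistrib' matrix_mul_assoc)
    then show ?thesis
      by (simp add: matrix_mul_lneg' matrix_matrix_mult_def vec_eq_iff sum_negf)
  qed
  have le2: "ht (h + - D) \<le> ht h" using ht_le[OF cD2 nilD'[unfolded D'eq]] .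
  have "h + - D = hs" unfolding hN D_def by simp
  then have "ht hs \<le> ht h" using le2 by simp
  then show ?thesis using le1 by simp
qed

end
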